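(* Under the hypotheses of the two-shock setting ($v_\pm>0$, $u_->u_+$, intermediate state $(u_*^{\epsilon_1\epsilon_2},v_*^{\epsilon_1\epsilon_2})$), $$\lim_{\epsilon_1,\epsilon_2\to0}2\sqrt{\epsilon_1}\,v_*^{\epsilon_1\epsilon_2}=\frac{u_--u_+}{2}.$$
   Context: Perturbed Brio system: $u_t+(\tfrac12u^2+\tfrac12\epsilon_1v^2)_x=0$, $v_t+(uv-\epsilon_2v)_x=0$, $\epsilon_1,\epsilon_2>0$, $v>0$, with Riemann data $(u_-,v_-)$ for $x<0$, $(u_+,v_+)$ for $x>0$. A two-shock Riemann solution is one with an intermediate state $(u_*,v_* )$, $v_*>\max(v_-,v_+)$, $u_+<u_*<u_-$, such that $$u_*=u_-+(v_*-v_-)\frac{\epsilon_2-\sqrt{\epsilon_2^2+4\epsilon_1(v_*+v_-)^2}}{v_*+v_-},\qquad u_+=u_*+(v_+-v_* )\frac{\epsilon_2+\sqrt{\epsilon_2^2+4\epsilon_1(v_*+v_+)^2}}{v_*+v_+},$$ with shock speeds $\sigma_1=u_-+\frac{v_*(u_*-u_-)}{v_*-v_-}-\epsilon_2$ and $\sigma_2=u_++\frac{v_*(u_+-u_* )}{v_+-v_*}-\epsilon_2$. The limit is taken over parameters for which this solution exists. *)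

theory Defs
  imports Complex_Main
begin

text \<open>Two-shock Riemann solution of the perturbed Brio system with parameters
  e1 = epsilon_1, e2 = epsilon_2, Riemann data (um, vm) (left) and (up, vp) (right),
  and intermediate state (us, vs).\<close>
definition two_shock ::
  "real \<Rightarrow> real \<Rightarrow> real \<Rightarrow> real \<Rightarrow> real \<Rightarrow> real \<Rightarrow> real \<Rightarrow> real \<Rightarrow> bool" where
  "two_shock e1 e2 um vm up vp us vs \<longleftrightarrow>
     vs > max vm vp \<and> up < us \<and> us < um \<and>
     us = um + (vs - vm) * (e2 - sqrt (e2\<^sup>2 + 4 * e1 * (vs + vm)\<^sup>2)) / (vs + vm) \<and>
     up = us + (vp - vs) * (e2 + sqrt (e2\<^sup>2 + 4 * e1 * (vs + vp)\<^sup>2)) / (vs + vp)"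

definition sigma1 :: "real \<Rightarrow> real \<Rightarrow> real \<Rightarrow> real \<Rightarrow> real \<Rightarrow> real" where
  "sigma1 e2 um vm us vs = um + vs * (us - um) / (vs - vm) - e2"

definition sigma2 :: "real \<Rightarrow> real \<Rightarrow> real \<Rightarrow> real \<Rightarrow> real \<Rightarrow> real" where
  "sigma2 e2 up vp us vs = up + vs * (up - us) / (vp - vs) - e2"

end

theory Submission
  imports Defs
begin

lemma sqrt_bounds:
  fixes a b :: real assumes "a \<ge> 0" "b \<ge> 0"
  shows "b \<le> sqrt (a\<^sup>2 + b\<^sup>2)" "sqrt (a\<^sup>2 + b\<^sup>2) \<le> a + b"
proof -
  have "sqrt (b\<^sup>2) \<le> sqrt (a\<^sup>2 + b\<^sup>2)" by (simp add: real_sqrt_le_mono)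
  thus "b \<le> sqrt (a\<^sup>2 + b\<^sup>2)" using assms by simp
  have "a\<^sup>2 + b\<^sup>2 \<le> (a+b)\<^sup>2" using assms by (simp add: power2_eq_square algebra_simps)
  hence "sqrt (a\<^sup>2 + b\<^sup>2) \<le> sqrt ((a+b)\<^sup>2)" by (rule real_sqrt_le_mono)
  moreover have "sqrt ((a+b)\<^sup>2) = a + b" using assms by simp
  ultimately show "sqrt (a\<^sup>2 + b\<^sup>2) \<le> a + b" by simp
qed

lemma key_bound:
  fixes um vm up vp e1 e2 us vs :: real
  assumes "vm > 0" "vp > 0" "0 < e1" "0 < e2" "two_shock e1 e2 um vm up vp us vs"
  shows "\<bar>2 * sqrt e1 * vs - (um - up) / 2\<bar> \<le> sqrt e1 * (vm + vp) + e2"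
proof -
  define s where "s = sqrt e1"
  have s0: "s > 0" using assms s_def by simp
  have e1s: "e1 = s\<^sup>2" using assms s_def by simp
  define A where "A = vs + vm"
  define B where "B = vs + vp"
  have h: "vs > vm" "vs > vp" and us1: "us = um + (vs - vm) * (e2 - sqrt (e2\<^sup>2 + 4 * e1 * A\<^sup>2)) / A"
    and up1: "up = us + (vp - vs) * (e2 + sqrt (e2\<^sup>2 + 4 * e1 * B\<^sup>2)) / B"
    using assms(5) unfolding two_shock_def A_def B_def by auto
  have A0: "A > 0" "vs - vm \<le> A" "vs - vm > 0" using h assms A_def by auto
  have B0: "B > 0" "vs - vp \<le> B" "vs - vp > 0" using h assms B_def by auto
  define S1 where "S1 = sqrt (e2\<^sup>2 + 4 * e1 * A\<^sup>2)"
  define S2 where "S2 = sqrt (e2\<^sup>2 + 4 * e1 * B\<^sup>2)"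
  have r1: "4 * e1 * A\<^sup>2 = (2*s*A)\<^sup>2" "4 * e1 * B\<^sup>2 = (2*s*B)\<^sup>2"
    by (simp_all add: e1s power2_eq_square)
  have S1b: "2*s*A \<le> S1" "S1 \<le> e2 + 2*s*A"
    using sqrt_bounds[of e2 "2*s*A"] s0 A0 assms(4) unfolding S1_def r1 by auto
  have S2b: "2*s*B \<le> S2" "S2 \<le> e2 + 2*s*B"
    using sqrt_bounds[of e2 "2*s*B"] s0 B0 assms(4) unfolding S2_def r1 by auto
  define t1 where "t1 = um - us"
  define t2 where "t2 = us - up"
  have t1A: "t1 * A = (vs - vm) * (S1 - e2)"
    using us1 A0 unfolding t1_def S1_def by (simp add: field_simps)
  have t2B: "t2 * B = (vs - vp) * (S2 + e2)"
    using up1 B0 unfolding t2_def S2_def by (simp add: field_simps)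
  have "(vs - vm) * (S1 - e2) \<le> (vs - vm) * (2*s*A)"
    using S1b A0 by (intro mult_left_mono) auto
  hence t1u: "t1 \<le> 2*s*(vs-vm)" using t1A A0
    by (metis mult.commute mult_le_cancel_right_pos mult.left_commute mult.assoc)
  have "(vs - vm) * (S1 - e2) \<ge> (vs - vm) * (2*s*A - e2)"
    using S1b A0 by (intro mult_left_mono) auto
  moreover have "(vs - vm) * (2*s*A - e2) \<ge> (2*s*(vs-vm) - e2) * A"
  proof -
    have "e2 * (vs - vm) \<le> e2 * A" using A0 assms(4) by simp
    thus ?thesis by (simp add: algebra_simps)
  qed
  ultimately have "t1 * A \<ge> (2*s*(vs-vm) - e2) * A" using t1A by linarith
  hence t1l: "t1 \<ge> 2*s*(vs-vm) - e2" using A0 by simp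
  have "(vs - vp) * (S2 + e2) \<ge> (vs - vp) * (2*s*B)"
    using S2b B0 assms(4) by (intro mult_left_mono) auto
  hence t2l: "t2 \<ge> 2*s*(vs-vp)" using t2B B0
    by (metis mult.commute mult_le_cancel_right_pos mult.left_commute mult.assoc)
  have "(vs - vp) * (S2 + e2) \<le> (vs - vp) * (2*s*B + 2*e2)"
    using S2b B0 by (intro mult_left_mono) auto
  moreover have "(vs - vp) * (2*s*B + 2*e2) \<le> (2*s*(vs-vp) + 2*e2) * B"
  proof -
    have "e2 * (vs - vp) \<le> e2 * B" using B0 assms(4) by simp
    thus ?thesis by (simp add: algebra_simps)
  qed
  ultimately have "t2 * B \<le> (2*s*(vs-vp) + 2*e2) * B" using t2B by linarith
  hence t2u: "t2 \<le> 2*s*(vs-vp) + 2*e2" using B0 by simp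
  have D: "um - up = t1 + t2" unfolding t1_def t2_def by simp
  have P: "s * vm > 0" "s * vp > 0" using s0 assms by auto
  have Q: "t1 \<ge> 2*(s*vs) - 2*(s*vm) - e2" "t1 \<le> 2*(s*vs) - 2*(s*vm)" "t2 \<ge> 2*(s*vs) - 2*(s*vp)"
     "t2 \<le> 2*(s*vs) - 2*(s*vp) + 2*e2" using t1u t1l t2u t2l by (simp_all add: algebra_simps)
  have R: "s*(vm+vp) = s*vm + s*vp" by (simp add: algebra_simps)
  have E: "2*s*vs = 2*(s*vs)" by simp
  have "2*s*vs - (t1+t2)/2 \<le> s*(vm+vp) + e2" unfolding R E using P Q assms(4) by (simp add: field_simps)
  moreover have "-(2*s*vs - (t1+t2)/2) \<le> s*(vm+vp) + e2" unfolding R E using P Q assms(4) by (simp add: field_simps)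
  ultimately have "\<bar>2*s*vs - (t1+t2)/2\<bar> \<le> s*(vm+vp) + e2" by (rule abs_leI)
  thus ?thesis unfolding s_def[symmetric] D .
qed

theorem lemma5p2:
  fixes um vm up vp :: real
  assumes "vm > 0" and "vp > 0" and "um > up"
  shows "\<forall>\<epsilon>>0. \<exists>\<delta>>0. \<forall>e1 e2 us vs.
           0 < e1 \<and> e1 < \<delta> \<and> 0 < e2 \<and> e2 < \<delta> \<and> two_shock e1 e2 um vm up vp us vs
           \<longrightarrow> \<bar>2 * sqrt e1 * vs - (um - up) / 2\<bar> < \<epsilon>"
proof (intro allI impI)
  fix \<epsilon> :: real assume ep: "\<epsilon> > 0"
  define c where "c = \<epsilon> / (vm + vp + 1)"
  have c0: "c > 0" using ep assms c_def by simp
  have nz: "vm + vp + 1 \<noteq> 0" using assms by simp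
  have ceq: "c * (vm + vp) + c = \<epsilon>" 
  proof -
    have "c * (vm + vp) + c = c * (vm + vp + 1)" by (simp add: algebra_simps)
    also have "\<dots> = \<epsilon>" using nz unfolding c_def by simp
    finally show ?thesis .
  qed
  define \<delta> where "\<delta> = min 1 (c\<^sup>2)"
  have d0: "\<delta> > 0" using c0 \<delta>_def by simp
  have dc: "\<delta> \<le> c"
  proof (cases "c \<le> 1")
    case True
    hence "c\<^sup>2 \<le> c" using c0 by (simp add: power2_eq_square mult_left_le)
    thus ?thesis unfolding \<delta>_def by simp
  next
    case False thus ?thesis unfolding \<delta>_def by simp
  qed
  have sd: "sqrt \<delta> \<le> c" using d0 c0 unfolding \<delta>_def
    by (metis min.cobounded2 real_sqrt_le_mono real_sqrt_abs abs_of_pos)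
  show "\<exists>\<delta>>0. \<forall>e1 e2 us vs.
           0 < e1 \<and> e1 < \<delta> \<and> 0 < e2 \<and> e2 < \<delta> \<and> two_shock e1 e2 um vm up vp us vs
           \<longrightarrow> \<bar>2 * sqrt e1 * vs - (um - up) / 2\<bar> < \<epsilon>"
  proof (intro exI[of _ \<delta>] conjI allI impI d0)
    fix e1 e2 us vs assume H: "0 < e1 \<and> e1 < \<delta> \<and> 0 < e2 \<and> e2 < \<delta> \<and> two_shock e1 e2 um vm up vp us vs"
    have kb: "\<bar>2 * sqrt e1 * vs - (um - up) / 2\<bar> \<le> sqrt e1 * (vm + vp) + e2"
      using key_bound[of vm vp e1 e2 um up us vs] H assms by blast
    have "sqrt e1 < sqrt \<delta>" using H by simp
    hence "sqrt e1 < c" using sd by linarith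
    hence "sqrt e1 * (vm + vp) \<le> c * (vm + vp)" using assms by (intro mult_right_mono) auto
    moreover have "e2 < c" using H dc by linarith
    ultimately show "\<bar>2 * sqrt e1 * vs - (um - up) / 2\<bar> < \<epsilon>" using kb ceq by linarith
  qed
qed

end
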